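(* Let $q\geq 3$ be an odd prime power, $m\geq 2$, and $\delta_2=(q-1)q^{m-1}-q^{\lfloor\frac{2m-1}{3}\rfloor}-q^{\lfloor\frac{m-1}{3}\rfloor}-1$. Then the $q$-cyclotomic coset $C_{\delta_2}^{(q,q^m-1)}$ has size $m$ if $3\nmid m$ and size $\frac{m}{3}$ if $3\mid m$.
   Context: $C_i^{(q,N)}=\{i,iq,iq^2,\ldots\}\bmod N$ denotes the $q$-cyclotomic coset of $i$ modulo $N$. *)

theory Defs
  imports "HOL-Computational_Algebra.Primes"
begin

definition cyclotomic_coset :: "nat \<Rightarrow> nat \<Rightarrow> nat \<Rightarrow> nat set" where
  "cyclotomic_coset q N i = {(i * q ^ j) mod N | j. True}"

end

theory Submission
  imports Defs "HOL-Number_Theory.Cong"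
begin

lemma geo3: "(q::nat) \<ge> 3 \<Longrightarrow> 2 * (\<Sum>i<n. q^i) + 1 \<le> q^n"
proof (induction n)
  case 0 then show ?case by simp
next
  case (Suc n)
  have "2 * (\<Sum>i<Suc n. q^i) + 1 = (2 * (\<Sum>i<n. q^i) + 1) + 2*q^n" by simp
  also have "\<dots> \<le> 3 * q^n" using Suc by simp
  also have "\<dots> \<le> q * q^n" using Suc.prems by simp
  finally show ?case by simp
qed

lemma sum_le_pow: "(q::nat) \<ge> 3 \<Longrightarrow> finite A \<Longrightarrow> A \<noteq> {} \<Longrightarrow> (\<Sum>a\<in>A. q^a) < q^(Suc (Max A))"
proof -
  assume q: "q \<ge> 3" and f: "finite A" and ne: "A \<noteq> {}"
  have "A \<subseteq> {..<Suc (Max A)}" using f ne by (auto simp: less_Suc_eq_le)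
  then have "(\<Sum>a\<in>A. q^a) \<le> (\<Sum>i<Suc (Max A). q^i)" by (intro sum_mono2) auto
  also have "\<dots> < q^(Suc (Max A))" using geo3[OF q, of "Suc (Max A)"] by linarith
  finally show ?thesis .
qed

lemma sum_ge_pow: "(q::nat) \<ge> 3 \<Longrightarrow> finite A \<Longrightarrow> A \<noteq> {} \<Longrightarrow> q^(Max A) \<le> (\<Sum>a\<in>A. q^a)"
  by (intro member_le_sum) auto

lemma pow_sum_inj:
  assumes q: "(q::nat) \<ge> 3" and "finite A"
  shows "finite B \<Longrightarrow> (\<Sum>a\<in>A. q^a) = (\<Sum>b\<in>B. q^b) \<Longrightarrow> A = B"
  using assms(2)
proof (induction A arbitrary: B rule: finite_remove_induct)
  case empty
  show ?case
  proof (rule ccontr)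
    assume "{} \<noteq> B"
    then obtain b where b: "b \<in> B" by blast
    have "q^b \<le> (\<Sum>b\<in>B. q^b)" using empty.prems(1) b by (intro member_le_sum) auto
    moreover have "q^b > 0" using q by simp
    ultimately show False using empty.prems(2) by simp
  qed
next
  case (remove A)
  have fA: "finite A" and neA: "A \<noteq> {}" using remove.hyps by auto
  have fB: "finite B" and eq: "(\<Sum>a\<in>A. q^a) = (\<Sum>b\<in>B. q^b)" using remove.prems by auto
  have IH: "\<And>x B'. x \<in> A \<Longrightarrow> finite B' \<Longrightarrow> (\<Sum>a\<in>A - {x}. q^a) = (\<Sum>b\<in>B'. q^b) \<Longrightarrow> A - {x} = B'"
    using remove.IH by blast
  have Bne: "B \<noteq> {}"
  proof
    assume "B = {}"
    then have "(\<Sum>a\<in>A. q^a) = 0" using eq by simp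
    moreover obtain a where "a \<in> A" using neA by blast
    moreover have "q^a \<le> (\<Sum>a\<in>A. q^a)" using fA \<open>a \<in> A\<close> by (intro member_le_sum) auto
    ultimately show False using q by simp
  qed
  have eqM: "Max A = Max B"
  proof (rule ccontr)
    assume "Max A \<noteq> Max B"
    then consider "Max A < Max B" | "Max B < Max A" by linarith
    then show False
    proof cases
      case 1
      have "(\<Sum>a\<in>A. q^a) < q^(Suc (Max A))" using sum_le_pow[OF q fA neA] .
      also have "\<dots> \<le> q^(Max B)" using 1 q by (intro power_increasing) auto
      also have "\<dots> \<le> (\<Sum>b\<in>B. q^b)" using sum_ge_pow[OF q fB Bne] .
      finally show False using eq by simp
    next
      case 2
      have "(\<Sum>a\<in>B. q^a) < q^(Suc (Max B))" using sum_le_pow[OF q fB Bne] .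
      also have "\<dots> \<le> q^(Max A)" using 2 q by (intro power_increasing) auto
      also have "\<dots> \<le> (\<Sum>b\<in>A. q^b)" using sum_ge_pow[OF q fA neA] .
      finally show False using eq by simp
    qed
  qed
  define M where "M = Max A"
  have MA: "M \<in> A" using fA neA M_def by simp
  have MB: "M \<in> B" using fB Bne M_def eqM by simp
  have "(\<Sum>a\<in>A - {M}. q^a) = (\<Sum>a\<in>B - {M}. q^a)"
    using sum.remove[OF fA MA, of "\<lambda>a. q^a"] sum.remove[OF fB MB, of "\<lambda>a. q^a"] eq
    by simp
  then have "A - {M} = B - {M}" using IH[OF MA] fB by simp
  then show ?case using MA MB by blast
qed

lemma pow_mod_period:
  assumes "m \<ge> 1" "(q::nat) \<ge> 2"
  shows "q^n mod (q^m - 1) = q^(n mod m) mod (q^m - 1)"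
proof -
  let ?N = "q^m - 1"
  have "q^n = q^(n mod m) * (q^m)^(n div m)"
    by (metis div_mult_mod_eq power_add power_mult add.commute mult.commute)
  moreover have "q^m \<ge> 1" using assms by simp
  then have "q^m = ?N + 1" by simp
  then have "(q^m) mod ?N = 1 mod ?N" by (metis mod_add_self1 add.commute)
  then have "(q^m)^(n div m) mod ?N = 1 mod ?N" by (metis power_mod power_one)
  ultimately show ?thesis
    by (metis mod_mult_right_eq mult.right_neutral)
qed

lemma coset_image:
  assumes "m \<ge> 1" "(q::nat) \<ge> 2"
  shows "cyclotomic_coset q (q ^ m - 1) i = (\<lambda>j. i*q^j mod (q^m-1)) ` {..<m}"
proof -
  have e: "i*q^j mod (q^m-1) = i*q^(j mod m) mod (q^m-1)" for j
    by (metis mod_mult_right_eq pow_mod_period[OF assms])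
  have m0: "0 < m" using assms by simp
  show ?thesis unfolding cyclotomic_coset_def
  proof (intro equalityI subsetI)
    fix y assume "y \<in> {i * q ^ j mod (q ^ m - 1) |j. True}"
    then obtain j where "y = i * q ^ j mod (q ^ m - 1)" by blast
    then have "y = i * q ^ (j mod m) mod (q ^ m - 1)" using e by simp
    moreover have "j mod m \<in> {..<m}" using m0 by simp
    ultimately show "y \<in> (\<lambda>j. i*q^j mod (q^m-1)) ` {..<m}" by blast
  qed blast
qed

lemma neg_mod:
  assumes "d + x = (N::nat)" "x*c mod N \<noteq> 0"
  shows "d*c mod N = N - x*c mod N"
proof -
  have Np: "N > 0" using assms by (cases "N = 0") auto
  have "(d*c mod N + x*c mod N) mod N = (d*c + x*c) mod N"
    by (simp add: mod_add_eq)
  also have "d*c + x*c = N * c" by (metis assms(1) distrib_right)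
  finally have z: "(d*c mod N + x*c mod N) mod N = 0" by simp
  have l: "d*c mod N < N" "x*c mod N < N" using Np by auto
  show ?thesis
  proof (cases "d*c mod N + x*c mod N < N")
    case True
    then have "d*c mod N + x*c mod N = 0" using z by simp
    then show ?thesis using assms(2) by simp
  next
    case False
    have "d*c mod N + x*c mod N - N < N" using l by linarith
    then have "(d*c mod N + x*c mod N) mod N = d*c mod N + x*c mod N - N"
      using l False by (simp add: le_mod_geq)
    then show ?thesis using z l False by simp
  qed
qed


lemma modm: "e < m \<Longrightarrow> j < (m::nat) \<Longrightarrow> (e+j) mod m = (if e+j < m then e+j else e+j-m)"
  by (simp add: le_mod_geq mod_less)


lemma add3_mod: "((A::nat)+B+C) mod N = (A mod N + B mod N + C mod N) mod N"
  by (metis mod_add_eq mod_add_left_eq)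

lemma rot_distinct:
  assumes "e < m" "e' < (m::nat)" "e \<noteq> e'"
  shows "(e+j) mod m \<noteq> (e'+j) mod m"
proof
  assume "(e+j) mod m = (e'+j) mod m"
  then have "[e + j = e' + j] (mod m)" by (simp add: cong_def)
  then have "[e = e'] (mod m)" by (simp add: cong_add_rcancel_nat)
  then show False using assms cong_less_modulus_unique_nat by blast
qed

lemma rot_cong:
  assumes "e1 < m" "e2 < m" "e3 < (m::nat)" "e1 \<noteq> e2" "e1 \<noteq> e3" "e2 \<noteq> e3"
    and eq: "{(e1+j) mod m, (e2+j) mod m, (e3+j) mod m} = {(e1+j') mod m, (e2+j') mod m, (e3+j') mod m}"
  shows "[3*j = 3*j'] (mod m)"
proof -
  have s: "(\<Sum>x\<in>{(e1+i) mod m, (e2+i) mod m, (e3+i) mod m}. x) = (e1+i) mod m + (e2+i) mod m + (e3+i) mod m" for i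
    using rot_distinct[OF assms(1,2,4), of i] rot_distinct[OF assms(1,3,5), of i] rot_distinct[OF assms(2,3,6), of i]
    by simp
  have "(\<Sum>x\<in>{(e1+j) mod m, (e2+j) mod m, (e3+j) mod m}. x) = (\<Sum>x\<in>{(e1+j') mod m, (e2+j') mod m, (e3+j') mod m}. x)"
    using eq by (rule arg_cong)
  then have se: "(e1+j) mod m + (e2+j) mod m + (e3+j) mod m = (e1+j') mod m + (e2+j') mod m + (e3+j') mod m"
    unfolding s .
  have "[(e1+j) + (e2+j) + (e3+j) = (e1+j') + (e2+j') + (e3+j')] (mod m)"
    unfolding cong_def add3_mod[of "e1+j"] add3_mod[of "e1+j'"] se ..
  moreover have "(e1+j) + (e2+j) + (e3+j) = (e1+e2+e3) + 3*j" "(e1+j') + (e2+j') + (e3+j') = (e1+e2+e3) + 3*j'"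
    by simp_all
  ultimately have "[(e1+e2+e3) + 3*j = (e1+e2+e3) + 3*j'] (mod m)"
    by simp
  then show ?thesis by (simp add: cong_add_lcancel_nat)
qed

lemma orbit_formula:
  assumes q: "(q::nat) \<ge> 3" and m: "m \<ge> 1"
    and e: "e1 < m" "e2 < m" "e3 < m" "e1 \<noteq> e2" "e1 \<noteq> e3" "e2 \<noteq> e3"
    and j: "j < m"
  shows "(q^e1 + q^e2 + q^e3) * q^j mod (q^m - 1) =
           (\<Sum>e\<in>{(e1+j) mod m, (e2+j) mod m, (e3+j) mod m}. q^e)"
    and "(q^e1 + q^e2 + q^e3) * q^j mod (q^m - 1) \<noteq> 0"
proof -
  let ?N = "q^m - 1"
  let ?F = "{(e1+j) mod m, (e2+j) mod m, (e3+j) mod m}"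
  have d: "(e1+j) mod m \<noteq> (e2+j) mod m" "(e1+j) mod m \<noteq> (e3+j) mod m" "(e2+j) mod m \<noteq> (e3+j) mod m"
    using rot_distinct e by auto
  have S: "(\<Sum>e\<in>?F. q^e) = q^((e1+j) mod m) + q^((e2+j) mod m) + q^((e3+j) mod m)"
    using d by simp
  have q2: "q \<ge> 2" using q by simp
  have xe: "(q^e1 + q^e2 + q^e3) * q^j = q^(e1+j) + q^(e2+j) + q^(e3+j)"
    by (simp add: power_add algebra_simps)
  have "(q^e1 + q^e2 + q^e3) * q^j mod ?N
      = (q^(e1+j) mod ?N + q^(e2+j) mod ?N + q^(e3+j) mod ?N) mod ?N"
    unfolding xe by (rule add3_mod)
  also have "\<dots> = (q^((e1+j) mod m) mod ?N + q^((e2+j) mod m) mod ?N + q^((e3+j) mod m) mod ?N) mod ?N"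
    using pow_mod_period[OF m q2] by simp
  also have "\<dots> = (\<Sum>e\<in>?F. q^e) mod ?N"
    unfolding S by (rule add3_mod[symmetric])
  also have "\<dots> = (\<Sum>e\<in>?F. q^e)"
  proof (rule mod_less)
    have "?F \<subseteq> {..<m}" using m by auto
    then have "(\<Sum>e\<in>?F. q^e) \<le> (\<Sum>i<m. q^i)" by (intro sum_mono2) auto
    moreover have "2 * (\<Sum>i<m. q^i) + 1 \<le> q^m" using geo3[OF q] .
    moreover have "q^((e1+j) mod m) \<ge> 1" using q by simp
    then have "(\<Sum>e\<in>?F. q^e) \<ge> 1" using S by linarith
    ultimately show "(\<Sum>e\<in>?F. q^e) < ?N" by linarith
  qed
  finally show 1: "(q^e1 + q^e2 + q^e3) * q^j mod (q^m - 1) = (\<Sum>e\<in>?F. q^e)" .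
  show "(q^e1 + q^e2 + q^e3) * q^j mod (q^m - 1) \<noteq> 0" unfolding 1 S using q by simp
qed


lemma p3: "prime (3::nat)"
proof -
  have "{2..<3::nat} = {2}" by auto
  then show ?thesis by (simp add: prime_nat_iff')
qed

theorem lemma19:
  fixes q m p k :: nat
  assumes "prime p" and "k \<ge> 1" and "q = p ^ k"
    and "odd q" and "q \<ge> 3"
    and "m \<ge> 2"
  defines "\<delta>\<^sub>2 \<equiv> (q - 1) * q ^ (m - 1) - q ^ ((2 * m - 1) div 3) - q ^ ((m - 1) div 3) - 1"
  shows "card (cyclotomic_coset q (q ^ m - 1) \<delta>\<^sub>2) = (if 3 dvd m then m div 3 else m)"
proof -
  have q3: "q \<ge> 3" and m2: "m \<ge> 2" using assms by auto
  have q2: "q \<ge> 2" using q3 by simp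
  define N where "N = q^m - 1"
  define a where "a = (2*m-1) div 3"
  define b where "b = (m-1) div 3"
  define P where "P = q^(m-1)"
  define x where "x = P + q^a + q^b"
  have ab: "a \<le> m-1" "b < m-1" using m2 unfolding a_def b_def by presburger+
  have qm: "q^m = q*P" unfolding P_def using m2 by (cases m) auto
  have pa: "q^a \<le> P" unfolding P_def using ab q3 by (intro power_increasing) auto
  have pb: "q^b < P" unfolding P_def using ab q3 by (intro power_strict_increasing) auto
  have P2: "2*P \<le> (q-1)*P" using q3 by (intro mult_right_mono) auto
  have qP: "(q-1)*P + P = q*P" using q3 by (cases q) auto
  have d2: "\<delta>\<^sub>2 = (q-1)*P - q^a - q^b - 1" unfolding \<delta>\<^sub>2_def P_def a_def b_def by simp
  have NP: "N = q*P - 1" unfolding N_def qm by simp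
  have dx: "\<delta>\<^sub>2 + x = N" unfolding d2 NP x_def using pa pb P2 qP by linarith
  have Npos: "N > 0" using dx pb unfolding x_def by linarith
  define R where "R j = x*q^j mod N" for j
  have coset: "cyclotomic_coset q N \<delta>\<^sub>2 = (\<lambda>j. \<delta>\<^sub>2*q^j mod N) ` {..<m}"
    unfolding N_def using coset_image m2 q2 by simp
  have key: "card (cyclotomic_coset q N \<delta>\<^sub>2) = card (R ` {..<m})" if nz: "\<And>j. j<m \<Longrightarrow> R j \<noteq> 0"
  proof -
    have "(\<lambda>j. \<delta>\<^sub>2*q^j mod N) ` {..<m} = (\<lambda>r. N - r) ` (R ` {..<m})"
      unfolding image_image R_def using neg_mod[OF dx] nz[unfolded R_def] by (intro image_cong) auto
    moreover have "inj_on (\<lambda>r. N - r) (R ` {..<m})"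
    proof (rule inj_onI)
      fix u v assume uv: "u \<in> R ` {..<m}" "v \<in> R ` {..<m}" "N - u = N - v"
      have "R j < N" for j unfolding R_def using Npos by simp
      then have "u < N" "v < N" using uv by auto
      then show "u = v" using uv(3) by linarith
    qed
    ultimately show ?thesis by (simp add: coset card_image)
  qed
  have main: "card (R ` {..<m}) = (if 3 dvd m then m div 3 else m) \<and> (\<forall>j<m. R j \<noteq> 0)"
  proof (cases "m = 2")
    case True
    have ab2: "a = 1" "b = 0" "P = q" unfolding a_def b_def P_def using True by auto
    have x2: "x = 2*q + 1" unfolding x_def ab2 by simp
    have qq: "3*q \<le> q*q" using q3 by (intro mult_right_mono) auto
    have N2: "N = q*q - 1" using NP ab2 by simp
    have lt1: "2*q+1 < N" "q+2 < N" using N2 qq q3 by linarith+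
    have R0: "R 0 = 2*q+1" unfolding R_def x2 using lt1 by simp
    have "x*q^1 = 2*(q*q) + q" unfolding x2 by (simp add: algebra_simps)
    also have "\<dots> = 2*N + (q+2)" using N2 qq q3 by linarith
    finally have "x*q^1 = 2*N + (q+2)" .
    moreover have "(2*N + (q+2)) mod N = (q+2) mod N" by (metis add.commute mod_mult_self1 mult.commute)
    ultimately have R1: "R 1 = q+2" unfolding R_def using lt1(2) by (metis mod_less)
    have "{..<m} = {0, 1}" using True by auto
    then have "R ` {..<m} = {R 0, R 1}" by simp
    then have "card (R ` {..<m}) = 2" using R0 R1 q3 by simp
    moreover have "\<forall>j<m. R j \<noteq> 0" using R0 R1 True by (auto simp: less_2_cases_iff)
    ultimately show ?thesis using True by simp
  next
    case False
    then have m3: "m \<ge> 3" using m2 by simp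
    have h3: "(2*m-1) div 3 < m - 1" "(m-1) div 3 < (2*m-1) div 3" using m3 by presburger+
    have ab3: "a < m - 1" "b < a" unfolding a_def b_def by (rule h3(1), rule h3(2))
    have e1: "m - 1 < m" using m3 by simp
    have e: "m - 1 < m" "a < m" "b < m" "m - 1 \<noteq> a" "m - 1 \<noteq> b" "a \<noteq> b"
      using ab3 e1 less_trans[OF ab3(2) ab3(1)] less_trans[OF ab3(1) e1] less_trans[OF less_trans[OF ab3(2) ab3(1)] e1]
      by (simp_all only: less_imp_neq not_sym simp_thms)
    define F where "F j = {(m-1+j) mod m, (a+j) mod m, (b+j) mod m}" for j
    have xx: "x = q^(m-1) + q^a + q^b" unfolding x_def P_def by simp
    have RF: "R j = (\<Sum>e\<in>F j. q^e)" if "j < m" for j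
      unfolding R_def xx F_def N_def using orbit_formula(1)[OF q3 _ e that] m3 by simp
    have Rnz: "\<forall>j<m. R j \<noteq> 0"
      unfolding R_def xx N_def using orbit_formula(2)[OF q3 _ e] m3 by simp
    have Rc: "[3*j = 3*j'] (mod m)" if "j < m" "j' < m" "R j = R j'" for j j'
    proof -
      have fin: "finite (F i)" for i unfolding F_def by simp
      have "(\<Sum>e\<in>F j. q^e) = (\<Sum>e\<in>F j'. q^e)" using RF[OF that(1)] RF[OF that(2)] that(3) by simp
      then have "F j = F j'" using pow_sum_inj[OF q3 fin fin] by blast
      then show ?thesis using rot_cong[OF e] unfolding F_def by blast
    qed
    show ?thesis
    proof (cases "3 dvd m")
      case False
      have cp: "coprime 3 m" using False by (intro prime_imp_coprime p3)
      have "inj_on R {..<m}"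
      proof (rule inj_onI)
        fix j j' assume "j \<in> {..<m}" "j' \<in> {..<m}" "R j = R j'"
        then have "[3*j = 3*j'] (mod m)" using Rc by auto
        then have "[j = j'] (mod m)" using cong_mult_lcancel_nat[OF cp] by blast
        then show "j = j'" using \<open>j \<in> {..<m}\<close> \<open>j' \<in> {..<m}\<close> cong_less_modulus_unique_nat by auto
      qed
      then show ?thesis using False Rnz by (simp add: card_image)
    next
      case True
      define t where "t = m div 3"
      have mt: "m = 3*t" "t \<ge> 1" using True m3 unfolding t_def by auto
      have abt: "a = 2*t - 1" "b = t - 1" unfolding a_def b_def using mt by presburger+
      have f1: "(m-1+t) mod m = t-1"
      proof -
        have e1: "m-1+t = (t-1) + m" using mt by simp
        show ?thesis unfolding e1 mod_add_self2 using mt by simp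
      qed
      have f2: "(2*t-1+t) mod m = m-1"
      proof -
        have e2: "2*t-1+t = m-1" using mt by simp
        show ?thesis unfolding e2 using mt by simp
      qed
      have f3: "(t-1+t) mod m = 2*t-1"
      proof -
        have e3: "t-1+t = 2*t-1" using mt by simp
        show ?thesis unfolding e3 using mt by simp
      qed
      have g1: "(m-1+0) mod m = m-1" using mt by simp
      have g2: "(2*t-1+0) mod m = 2*t-1" using mt by simp
      have g3: "(t-1+0) mod m = t-1" using mt by simp
      have "F t = F 0" unfolding F_def abt f1 f2 f3 g1 g2 g3 by auto
      then have "R t = R 0" using RF[of t] RF[of 0] mt by simp
      then have xt: "x*q^t mod N = x mod N" unfolding R_def by simp
      have per: "x*q^(t*k) mod N = x mod N" for k
      proof (induction k)
        case 0 then show ?case by simp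
      next
        case (Suc k)
        have "x*q^(t*Suc k) = (x*q^(t*k)) * q^t" by (simp add: power_add algebra_simps)
        have "x*q^(t*Suc k) mod N = ((x*q^(t*k)) mod N * q^t) mod N" unfolding \<open>x*q^(t*Suc k) = (x*q^(t*k)) * q^t\<close> by (rule mod_mult_left_eq[symmetric])
        also have "\<dots> = (x mod N * q^t) mod N" using Suc by simp
        also have "\<dots> = x mod N" using xt by (simp add: mod_mult_left_eq)
        finally show ?case .
      qed
      have Rper: "R j = R (j mod t)" for j
      proof -
        have jj: "q^j = q^(t*(j div t) + j mod t)" by (simp only: mult_div_mod_eq)
        have "x*q^j = (x*q^(t*(j div t))) * q^(j mod t)"
          unfolding jj power_add by (rule mult.assoc[symmetric])
        have "x*q^j mod N = ((x*q^(t*(j div t))) mod N * q^(j mod t)) mod N" unfolding \<open>x*q^j = (x*q^(t*(j div t))) * q^(j mod t)\<close> by (rule mod_mult_left_eq[symmetric])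
        also have "\<dots> = (x mod N * q^(j mod t)) mod N" using per by simp
        also have "\<dots> = x * q^(j mod t) mod N" by (simp add: mod_mult_left_eq)
        finally show ?thesis unfolding R_def .
      qed
      have img: "R ` {..<m} = R ` {..<t}"
      proof
        show "R ` {..<m} \<subseteq> R ` {..<t}"
        proof
          fix y assume "y \<in> R ` {..<m}"
          then obtain j where "y = R j" by blast
          then have "y = R (j mod t)" using Rper by simp
          moreover have "j mod t < t" using mt by simp
          ultimately show "y \<in> R ` {..<t}" by blast
        qed
        show "R ` {..<t} \<subseteq> R ` {..<m}" using mt by (intro image_mono) auto
      qed
      have "inj_on R {..<t}"
      proof (rule inj_onI)
        fix j j' assume jj: "j \<in> {..<t}" "j' \<in> {..<t}" "R j = R j'"
        then have "[3*j = 3*j'] (mod 3*t)" using Rc mt by auto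
        then have "[j = j'] (mod t)" unfolding cong_def by (simp add: mod_mult_mult1)
        then show "j = j'" using jj cong_less_modulus_unique_nat by auto
      qed
      then show ?thesis using True Rnz img mt by (simp add: card_image)
    qed
  qed
  have "card (cyclotomic_coset q N \<delta>\<^sub>2) = (if 3 dvd m then m div 3 else m)"
    using key main by simp
  then show ?thesis unfolding N_def .
qed

end
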